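(* Let $(G,k)$ be an instance, let $v$ be a large-sparse vertex, and let $B\subseteq V\setminus\{v\}$ with $|B|\le 2k$ be such that $G-B$ has no cycle passing through $v$. Let $\mathcal{C}_{\mathrm{tree}}$ (resp. $\mathcal{C}_{\mathrm{nontree}}$) be the family of connected components of $G-v-B$ that contain a neighbor of $v$ and are trees (resp. are not trees). Assume $|\mathcal{C}_{\mathrm{tree}}|\ge 4k$ and every $C\in\mathcal{C}_{\mathrm{tree}}$ contains a vertex adjacent to some vertex of $B$. Let $B'\subseteq B$ and $\mathcal{C}'\subseteq\mathcal{C}_{\mathrm{tree}}$ be nonempty with $|B'|\le k$ such that (a) every vertex of $B$ adjacent to a vertex of some $C\in\mathcal{C}'$ lies in $B'$, and (b) there is a map assigning to each $C\in\mathcal{C}'$ a vertex of $B'$ adjacent to some vertex of $C$, such that every vertex of $B'$ is assigned to exactly two members of $\mathcal{C}'$. Let $G'$ be obtained from $G$ by deleting all edges between $v$ and $\bigcup_{C\in\mathcal{C}'}V(C)$ and then joining $v$ to each vertex of $B'$ by a double edge (two parallel edges). Then $(G,k)$ is a yes-instance if and only if $(G',k)$ is a yes-instance.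
   Context: Graphs are undirected, without self-loops, possibly with multi-edges. $N(v)$ is the set of vertices adjacent to $v$; $\rho(v)$ is the number of unordered pairs $\{u_1,u_2\}\subseteq N(v)$ joined by at least one edge. A vertex $v$ is large-sparse if $|N(v)|>7k$ and $\rho(v)\le |N(v)|(|N(v)|-1)/4$. A vertex set induces a clique if between any two distinct vertices there is exactly one edge, and a tree if it is connected and acyclic (two parallel edges form a cycle). A feasible solution is $X\subseteq V$, $|X|\le k$, with every component of $G-X$ a clique or a tree; $(G,k)$ is a yes-instance if a feasible solution exists. *)

theory Defs
  imports Complex_Main
begin

text \<open>A finite undirected multigraph without self-loops: a finite vertex set V and an
  edge-multiplicity function m (m u w = number of parallel edges between u and w).\<close>

definition mgraph :: "'a set \<Rightarrow> ('a \<Rightarrow> 'a \<Rightarrow> nat) \<Rightarrow> bool" where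
  "mgraph V m \<longleftrightarrow> finite V \<and> (\<forall>u w. m u w = m w u) \<and> (\<forall>u. m u u = 0)
     \<and> (\<forall>u w. m u w > 0 \<longrightarrow> u \<in> V \<and> w \<in> V)"

definition adj :: "('a \<Rightarrow> 'a \<Rightarrow> nat) \<Rightarrow> 'a \<Rightarrow> 'a \<Rightarrow> bool" where
  "adj m u w \<longleftrightarrow> m u w > 0"

definition nbhd :: "'a set \<Rightarrow> ('a \<Rightarrow> 'a \<Rightarrow> nat) \<Rightarrow> 'a \<Rightarrow> 'a set" where
  "nbhd V m v = {u \<in> V. adj m v u}"

definition rho :: "'a set \<Rightarrow> ('a \<Rightarrow> 'a \<Rightarrow> nat) \<Rightarrow> 'a \<Rightarrow> nat" where
  "rho V m v = card {{u1, u2} | u1 u2. u1 \<in> nbhd V m v \<and> u2 \<in> nbhd V m v \<and> u1 \<noteq> u2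
                                        \<and> adj m u1 u2}"

definition large_sparse :: "'a set \<Rightarrow> ('a \<Rightarrow> 'a \<Rightarrow> nat) \<Rightarrow> nat \<Rightarrow> 'a \<Rightarrow> bool" where
  "large_sparse V m k v \<longleftrightarrow> v \<in> V \<and> card (nbhd V m v) > 7 * k \<and>
     real (rho V m v) \<le> real (card (nbhd V m v)) * (real (card (nbhd V m v)) - 1) / 4"

definition reach :: "('a \<Rightarrow> 'a \<Rightarrow> nat) \<Rightarrow> 'a set \<Rightarrow> 'a \<Rightarrow> 'a \<Rightarrow> bool" where
  "reach m S = (\<lambda>u w. u \<in> S \<and> w \<in> S \<and> adj m u w)\<^sup>*\<^sup>*"

definition connected_in :: "('a \<Rightarrow> 'a \<Rightarrow> nat) \<Rightarrow> 'a set \<Rightarrow> bool" where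
  "connected_in m S \<longleftrightarrow> S \<noteq> {} \<and> (\<forall>u\<in>S. \<forall>w\<in>S. reach m S u w)"

definition components :: "('a \<Rightarrow> 'a \<Rightarrow> nat) \<Rightarrow> 'a set \<Rightarrow> 'a set set" where
  "components m S = {{w. reach m S u w} | u. u \<in> S}"

definition is_cycle :: "('a \<Rightarrow> 'a \<Rightarrow> nat) \<Rightarrow> 'a set \<Rightarrow> 'a list \<Rightarrow> bool" where
  "is_cycle m S xs \<longleftrightarrow> distinct xs \<and> set xs \<subseteq> S \<and>
     ((length xs = 2 \<and> m (xs ! 0) (xs ! 1) \<ge> 2) \<or>
      (length xs \<ge> 3 \<and> (\<forall>i < length xs. adj m (xs ! i) (xs ! ((i + 1) mod length xs)))))"

definition acyclic_in :: "('a \<Rightarrow> 'a \<Rightarrow> nat) \<Rightarrow> 'a set \<Rightarrow> bool" where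
  "acyclic_in m S \<longleftrightarrow> \<not> (\<exists>xs. is_cycle m S xs)"

definition is_tree :: "('a \<Rightarrow> 'a \<Rightarrow> nat) \<Rightarrow> 'a set \<Rightarrow> bool" where
  "is_tree m S \<longleftrightarrow> connected_in m S \<and> acyclic_in m S"

definition is_clique :: "('a \<Rightarrow> 'a \<Rightarrow> nat) \<Rightarrow> 'a set \<Rightarrow> bool" where
  "is_clique m S \<longleftrightarrow> (\<forall>u\<in>S. \<forall>w\<in>S. u \<noteq> w \<longrightarrow> m u w = 1)"

definition feasible :: "'a set \<Rightarrow> ('a \<Rightarrow> 'a \<Rightarrow> nat) \<Rightarrow> nat \<Rightarrow> 'a set \<Rightarrow> bool" where
  "feasible V m k X \<longleftrightarrow> X \<subseteq> V \<and> card X \<le> k \<and>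
     (\<forall>C \<in> components m (V - X). is_clique m C \<or> is_tree m C)"

definition yes_instance :: "'a set \<Rightarrow> ('a \<Rightarrow> 'a \<Rightarrow> nat) \<Rightarrow> nat \<Rightarrow> bool" where
  "yes_instance V m k \<longleftrightarrow> (\<exists>X. feasible V m k X)"

definition cycle_through :: "'a set \<Rightarrow> ('a \<Rightarrow> 'a \<Rightarrow> nat) \<Rightarrow> 'a set \<Rightarrow> 'a \<Rightarrow> bool" where
  "cycle_through V m B v \<longleftrightarrow> (\<exists>xs. is_cycle m (V - B) xs \<and> v \<in> set xs)"

definition C_tree :: "'a set \<Rightarrow> ('a \<Rightarrow> 'a \<Rightarrow> nat) \<Rightarrow> 'a set \<Rightarrow> 'a \<Rightarrow> 'a set set" where
  "C_tree V m B v = {C \<in> components m (V - {v} - B). C \<inter> nbhd V m v \<noteq> {} \<and> is_tree m C}"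

definition reduced :: "('a \<Rightarrow> 'a \<Rightarrow> nat) \<Rightarrow> 'a \<Rightarrow> 'a set \<Rightarrow> 'a set set \<Rightarrow> 'a \<Rightarrow> 'a \<Rightarrow> nat" where
  "reduced m v B' Cs = (\<lambda>x y.
     (if (x = v \<and> y \<in> \<Union>Cs) \<or> (y = v \<and> x \<in> \<Union>Cs) then 0 else m x y)
     + (if (x = v \<and> y \<in> B') \<or> (y = v \<and> x \<in> B') then 2 else 0))"

end

theory Submission
  imports Defs
begin


definition symm :: "('a \<Rightarrow> 'a \<Rightarrow> nat) \<Rightarrow> bool" where
  "symm m \<longleftrightarrow> (\<forall>u w. m u w = m w u)"

lemma adj_sym: "symm m \<Longrightarrow> adj m u w \<Longrightarrow> adj m w u"
  by (simp add: symm_def adj_def)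

lemma reach_mono: assumes "S \<subseteq> T" "reach m S u w" shows "reach m T u w"
  using assms(2) unfolding reach_def
proof (induction rule: rtranclp_induct)
  case base then show ?case by simp
next
  case (step y z)
  have "(\<lambda>u w. u \<in> T \<and> w \<in> T \<and> adj m u w) y z" using step.hyps(2) assms(1) by blast
  then show ?case using step.IH by (rule rtranclp.rtrancl_into_rtrancl[rotated])
qed

lemma reach_step: "reach m S u w \<Longrightarrow> w \<in> S \<Longrightarrow> x \<in> S \<Longrightarrow> adj m w x \<Longrightarrow> reach m S u x"
  unfolding reach_def by (rule rtranclp.rtrancl_into_rtrancl) auto

lemma reach_trans: "reach m S u w \<Longrightarrow> reach m S w x \<Longrightarrow> reach m S u x"
  unfolding reach_def by (rule rtranclp_trans)

lemma reach_refl: "reach m S u u"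
  unfolding reach_def by simp

lemma reach_in: "reach m S u w \<Longrightarrow> u = w \<or> (u \<in> S \<and> w \<in> S)"
  unfolding reach_def by (induction rule: rtranclp_induct) auto

lemma reach_sym: assumes "symm m" "reach m S u w" shows "reach m S w u"
  using assms(2) unfolding reach_def
proof (induction rule: rtranclp_induct)
  case base then show ?case by simp
next
  case (step y z)
  have "(\<lambda>u w. u \<in> S \<and> w \<in> S \<and> adj m u w) z y" using step.hyps(2) adj_sym[OF assms(1)] by blast
  then show ?case using step.IH by (rule converse_rtranclp_into_rtranclp)
qed

lemma reach_cong:
  assumes "\<forall>x\<in>S. \<forall>y\<in>S. m x y = m' x y"
  shows "reach m S = reach m' S"
proof -
  have "(\<lambda>u w. u \<in> S \<and> w \<in> S \<and> adj m u w) = (\<lambda>u w. u \<in> S \<and> w \<in> S \<and> adj m' u w)"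
    using assms by (auto simp: adj_def fun_eq_iff)
  then show ?thesis unfolding reach_def by simp
qed

lemma reach_closed:
  assumes "A \<subseteq> S" "u \<in> A" "\<forall>x\<in>A. \<forall>y\<in>S. adj m x y \<longrightarrow> y \<in> A"
  shows "reach m S u w \<longleftrightarrow> reach m A u w"
proof
  assume "reach m S u w"
  then have "reach m A u w \<and> w \<in> A" unfolding reach_def
  proof (induction rule: rtranclp_induct)
    case base then show ?case using assms(2) by simp
  next
    case (step y z)
    have yA: "y \<in> A" using step.IH by simp
    have "z \<in> S" "adj m y z" using step.hyps(2) by simp_all
    then have "z \<in> A" using assms(3) yA by blast
    have r1: "(\<lambda>u w. u \<in> A \<and> w \<in> A \<and> adj m u w)\<^sup>*\<^sup>* u y" using step.IH by simp
    have r2: "(\<lambda>u w. u \<in> A \<and> w \<in> A \<and> adj m u w) y z" using step.IH step.hyps(2) \<open>z \<in> A\<close> by simp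
    show ?case using rtranclp.rtrancl_into_rtrancl[OF r1 r2] \<open>z \<in> A\<close> by simp
  qed
  then show "reach m A u w" by simp
next
  assume "reach m A u w" then show "reach m S u w" by (rule reach_mono[OF assms(1)])
qed

lemma comp_eq:
  assumes "symm m" "K \<in> components m S" "x \<in> K"
  shows "K = {w. reach m S x w}"
proof -
  obtain u where u: "u \<in> S" "K = {w. reach m S u w}" using assms(2) unfolding components_def by auto
  then have ux: "reach m S u x" using assms(3) by auto
  have xu: "reach m S x u" by (rule reach_sym[OF assms(1) ux])
  show ?thesis
  proof (rule set_eqI)
    fix w
    show "w \<in> K \<longleftrightarrow> w \<in> {w. reach m S x w}"
      using u(2) reach_trans[OF ux, of w] reach_trans[OF xu, of w] by auto
  qed
qed

lemma comp_I: "u \<in> S \<Longrightarrow> {w. reach m S u w} \<in> components m S"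
  unfolding components_def by auto

lemma comp_sub: "K \<in> components m S \<Longrightarrow> K \<subseteq> S"
  unfolding components_def using reach_in by fastforce

lemma comp_mem: "K \<in> components m S \<Longrightarrow> \<exists>u\<in>S. u \<in> K \<and> K = {w. reach m S u w}"
  unfolding components_def using reach_refl by fastforce

lemma comp_disj:
  assumes "symm m" "K1 \<in> components m S" "K2 \<in> components m S" "x \<in> K1" "x \<in> K2"
  shows "K1 = K2"
  using comp_eq[OF assms(1,2,4)] comp_eq[OF assms(1,3,5)] by simp

lemma comp_adj:
  assumes "symm m" "K \<in> components m S" "x \<in> K" "y \<in> S" "adj m x y"
  shows "y \<in> K"
proof -
  have K: "K = {w. reach m S x w}" by (rule comp_eq[OF assms(1-3)])
  have "x \<in> S" using comp_sub[OF assms(2)] assms(3) by blast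
  then have "reach m S x y" using reach_step[OF reach_refl _ assms(4,5)] by blast
  then show ?thesis using K by blast
qed

lemma comp_reach:
  assumes "symm m" "K \<in> components m S" "x \<in> K" "reach m S x y"
  shows "y \<in> K"
  using comp_eq[OF assms(1-3)] assms(4) by blast

lemma comp_connected:
  assumes "symm m" "K \<in> components m S"
  shows "connected_in m K"
proof -
  obtain u where u: "u \<in> S" "u \<in> K" "K = {w. reach m S u w}" using comp_mem[OF assms(2)] by blast
  have KS: "K \<subseteq> S" using comp_sub assms(2) .
  have cl: "\<forall>x\<in>K. \<forall>y\<in>S. adj m x y \<longrightarrow> y \<in> K" using comp_adj[OF assms(1,2)] by blast
  have r: "reach m K x w" if "x \<in> K" "w \<in> K" for x w
  proof -
    have "K = {w. reach m S x w}" using comp_eq[OF assms that(1)] .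
    then have "reach m S x w" using that by blast
    then show ?thesis using reach_closed[OF KS that(1) cl] by simp
  qed
  show ?thesis unfolding connected_in_def using u r by blast
qed

lemma comp_sub_comp:
  assumes "symm m" "T \<subseteq> S" "D \<in> components m T"
  shows "\<exists>K \<in> components m S. D \<subseteq> K"
proof -
  obtain u where u: "u \<in> T" "D = {w. reach m T u w}" using assms(3) unfolding components_def by auto
  have "u \<in> S" using u(1) assms(2) by blast
  then have "{w. reach m S u w} \<in> components m S" by (rule comp_I)
  moreover have "D \<subseteq> {w. reach m S u w}" using u(2) reach_mono[OF assms(2)] by blast
  ultimately show ?thesis by blast
qed

lemma comp_finite: "finite S \<Longrightarrow> finite (components m S)"
proof -
  assume "finite S"
  have "components m S \<subseteq> Pow S" using comp_sub by blast
  then show ?thesis using \<open>finite S\<close> finite_subset by blast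
qed

lemma is_cycle_mono: "is_cycle m S xs \<Longrightarrow> set xs \<subseteq> T \<Longrightarrow> is_cycle m T xs"
  unfolding is_cycle_def by auto

lemma tree_sub:
  assumes "is_tree m K" "D \<subseteq> K" "connected_in m D"
  shows "is_tree m D"
proof -
  have "\<not> is_cycle m D xs" for xs
  proof
    assume "is_cycle m D xs"
    moreover have "set xs \<subseteq> K" using \<open>is_cycle m D xs\<close> assms(2) unfolding is_cycle_def by blast
    ultimately have "is_cycle m K xs" by (rule is_cycle_mono)
    then show False using assms(1) unfolding is_tree_def acyclic_in_def by blast
  qed
  then show ?thesis using assms(3) unfolding is_tree_def acyclic_in_def by blast
qed

lemma clique_sub: "is_clique m K \<Longrightarrow> D \<subseteq> K \<Longrightarrow> is_clique m D"
  unfolding is_clique_def by blast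

lemma is_cycle_transfer:
  assumes "is_cycle m S xs" "set xs \<subseteq> S2"
    "\<forall>i<length xs. m2 (xs!i) (xs!((i+1) mod length xs)) = m (xs!i) (xs!((i+1) mod length xs))"
  shows "is_cycle m2 S2 xs"
proof -
  have d: "distinct xs" using assms(1) unfolding is_cycle_def by blast
  consider "length xs = 2" "m (xs ! 0) (xs ! 1) \<ge> 2"
    | "length xs \<ge> 3" "\<forall>i < length xs. adj m (xs ! i) (xs ! ((i + 1) mod length xs))"
    using assms(1) unfolding is_cycle_def by blast
  then show ?thesis
  proof cases
    case 1
    then have "m2 (xs!0) (xs!((0+1) mod length xs)) = m (xs!0) (xs!((0+1) mod length xs))" using assms(3)[rule_format, of 0] by simp
    then have "m2 (xs!0) (xs!1) = m (xs!0) (xs!1)" using 1(1) by simp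
    then show ?thesis using 1 d assms(2) unfolding is_cycle_def by simp
  next
    case 2
    have "\<forall>i<length xs. adj m2 (xs ! i) (xs ! ((i + 1) mod length xs))"
    proof (intro allI impI)
      fix i assume i: "i < length xs"
      show "adj m2 (xs ! i) (xs ! ((i + 1) mod length xs))"
        using assms(3)[rule_format, OF i] 2(2)[rule_format, OF i] unfolding adj_def by simp
    qed
    then show ?thesis using 2(1) d assms(2) unfolding is_cycle_def by blast
  qed
qed

lemma is_cycle_cong:
  assumes "\<forall>x\<in>S. \<forall>y\<in>S. m x y = m' x y"
  shows "is_cycle m S xs \<longleftrightarrow> is_cycle m' S xs"
proof -
  have *: "is_cycle m2 S xs" if "is_cycle m1 S xs" "\<forall>x\<in>S. \<forall>y\<in>S. m1 x y = m2 x y" for m1 m2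
  proof -
    have "set xs \<subseteq> S" using that(1) unfolding is_cycle_def by blast
    then have "\<forall>i<length xs. m2 (xs!i) (xs!((i+1) mod length xs)) = m1 (xs!i) (xs!((i+1) mod length xs))"
    proof (intro allI impI)
      fix i assume i: "i < length xs"
      then have "0 < length xs" by arith
      then have "(i+1) mod length xs < length xs" by (rule mod_less_divisor)
      then have "xs!i \<in> S" "xs!((i+1) mod length xs) \<in> S" using i \<open>set xs \<subseteq> S\<close> nth_mem by blast+
      then show "m2 (xs!i) (xs!((i+1) mod length xs)) = m1 (xs!i) (xs!((i+1) mod length xs))"
        using that(2) by simp
    qed
    then show ?thesis by (rule is_cycle_transfer[OF that(1) \<open>set xs \<subseteq> S\<close>])
  qed
  have a2: "\<forall>x\<in>S. \<forall>y\<in>S. m' x y = m x y"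
  proof (intro ballI)
    fix x y assume xy: "x \<in> S" "y \<in> S"
    have "m x y = m' x y" using assms xy by blast
    then show "m' x y = m x y" by (rule sym)
  qed
  show ?thesis
  proof
    assume "is_cycle m S xs" then show "is_cycle m' S xs" using assms by (rule *)
  next
    assume "is_cycle m' S xs" then show "is_cycle m S xs" using a2 by (rule *)
  qed
qed

lemma tree_cong:
  assumes "\<forall>x\<in>K. \<forall>y\<in>K. m x y = m' x y"
  shows "is_tree m K \<longleftrightarrow> is_tree m' K" "is_clique m K \<longleftrightarrow> is_clique m' K"
proof -
  show "is_tree m K \<longleftrightarrow> is_tree m' K"
    unfolding is_tree_def connected_in_def acyclic_in_def reach_cong[OF assms] is_cycle_cong[OF assms] ..
  show "is_clique m K \<longleftrightarrow> is_clique m' K"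
    unfolding is_clique_def using assms by simp
qed



lemma path_exists:
  assumes "reach m A u w" "u \<in> A"
  shows "\<exists>ps. ps \<noteq> [] \<and> hd ps = u \<and> last ps = w \<and> set ps \<subseteq> A \<and> distinct ps \<and> successively (adj m) ps"
  using assms(1) unfolding reach_def
proof (induction rule: rtranclp_induct)
  case base
  show ?case using assms(2) by (intro exI[of _ "[u]"]) simp
next
  case (step y z)
  obtain ps where ps: "ps \<noteq> []" "hd ps = u" "last ps = y" "set ps \<subseteq> A" "distinct ps" "successively (adj m) ps"
    using step.IH by blast
  have zA: "z \<in> A" and yz: "adj m y z" using step.hyps(2) by simp_all
  show ?case
  proof (cases "z \<in> set ps")
    case True
    then obtain a b where ab: "ps = a @ z # b" by (meson split_list)
    have "ps = (a @ [z]) @ b" using ab by simp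
    then have s: "successively (adj m) (a @ [z])" using ps(6) successively_append_iff by metis
    have "hd (a @ [z]) = u" using ps(2) ab by (cases a) auto
    moreover have "distinct (a @ [z])" using ps(5) ab by simp
    moreover have "set (a @ [z]) \<subseteq> A" using ps(4) ab by auto
    ultimately show ?thesis using s by (intro exI[of _ "a @ [z]"]) simp
  next
    case False
    have "successively (adj m) (ps @ [z])" using ps(1,3,6) yz by (simp add: successively_append_iff)
    moreover have "hd (ps @ [z]) = u" using ps(1,2) by simp
    ultimately show ?thesis using ps False zA by (intro exI[of _ "ps @ [z]"]) simp
  qed
qed

lemma cyc_adj:
  assumes "is_cycle m S xs" "symm m"
  shows "length xs \<ge> 2" "\<forall>i<length xs. adj m (xs!i) (xs!((i+1) mod length xs))"
proof -
  consider "length xs = 2" "m (xs ! 0) (xs ! 1) \<ge> 2"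
    | "length xs \<ge> 3" "\<forall>i < length xs. adj m (xs ! i) (xs ! ((i + 1) mod length xs))"
    using assms(1) unfolding is_cycle_def by blast
  then have "length xs \<ge> 2 \<and> (\<forall>i<length xs. adj m (xs!i) (xs!((i+1) mod length xs)))"
  proof cases
    case 1
    have a01: "adj m (xs!0) (xs!1)" using 1(2) by (simp add: adj_def)
    then have a10: "adj m (xs!1) (xs!0)" by (rule adj_sym[OF assms(2)])
    have "\<forall>i<length xs. adj m (xs!i) (xs!((i+1) mod length xs))"
    proof (intro allI impI)
      fix i assume "i < length xs"
      then have "i = 0 \<or> i = 1" using 1(1) by arith
      then show "adj m (xs!i) (xs!((i+1) mod length xs))" using a01 a10 1(1) by auto
    qed
    then show ?thesis using 1(1) by simp
  next
    case 2 then show ?thesis by simp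
  qed
  then show "length xs \<ge> 2" "\<forall>i<length xs. adj m (xs!i) (xs!((i+1) mod length xs))" by simp_all
qed

lemma cycle_of_path:
  assumes "distinct xs" "length xs \<ge> 3" "successively (adj m) xs" "adj m (last xs) (hd xs)" "set xs \<subseteq> S"
  shows "is_cycle m S xs"
proof -
  have "\<forall>i<length xs. adj m (xs!i) (xs!((i+1) mod length xs))"
  proof (intro allI impI)
    fix i assume i: "i < length xs"
    show "adj m (xs!i) (xs!((i+1) mod length xs))"
    proof (cases "Suc i < length xs")
      case True
      then show ?thesis using successively_nth[OF assms(3) True] by simp
    next
      case False
      then have "i = length xs - 1" using i by arith
      moreover have "xs \<noteq> []" using assms(2) by auto
      ultimately have "xs!i = last xs" "(i+1) mod length xs = 0" using i by (simp_all add: last_conv_nth)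
      moreover have "xs!0 = hd xs" using \<open>xs \<noteq> []\<close> by (simp add: hd_conv_nth)
      ultimately show ?thesis using assms(4) by simp
    qed
  qed
  then show ?thesis using assms unfolding is_cycle_def by blast
qed

lemma cycle_reach:
  assumes "is_cycle m S xs" "symm m"
  shows "\<forall>j<length xs. reach m S (xs!0) (xs!j)"
proof -
  have ad: "\<forall>i<length xs. adj m (xs!i) (xs!((i+1) mod length xs))" using cyc_adj[OF assms] by blast
  have sub: "set xs \<subseteq> S" using assms(1) unfolding is_cycle_def by blast
  show ?thesis
  proof (intro allI impI)
    fix j assume "j < length xs"
    then show "reach m S (xs!0) (xs!j)"
    proof (induction j)
      case 0 show ?case by (rule reach_refl)
    next
      case (Suc j)
      then have j: "j < length xs" by simp
      have "adj m (xs!j) (xs!(Suc j))" using ad[rule_format, OF j] Suc.prems by simp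
      moreover have "xs!j \<in> S" "xs!(Suc j) \<in> S" using sub j Suc.prems nth_mem by blast+
      ultimately show ?case using reach_step[OF Suc.IH[OF j]] by blast
    qed
  qed
qed

lemma interval_walk:
  assumes R: "\<forall>i. a \<le> i \<longrightarrow> i < b \<longrightarrow> R (xs!i) (xs!(i+1))"
    and sy: "\<And>x y. R x y \<Longrightarrow> R y x"
    and cl: "\<forall>i j. a \<le> i \<longrightarrow> i \<le> b \<longrightarrow> a \<le> j \<longrightarrow> j \<le> b \<longrightarrow> xs!i \<in> C \<longrightarrow> R (xs!i) (xs!j) \<longrightarrow> xs!j \<in> C"
    and c: "a \<le> c" "c \<le> b" "xs!c \<in> C"
  shows "\<forall>i. a \<le> i \<longrightarrow> i \<le> b \<longrightarrow> xs!i \<in> C"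
proof -
  have up: "c + d \<le> b \<longrightarrow> xs!(c+d) \<in> C" for d
  proof (induction d)
    case 0 then show ?case using c by simp
  next
    case (Suc d)
    show ?case
    proof
      assume h: "c + Suc d \<le> b"
      then have "xs!(c+d) \<in> C" using Suc.IH by simp
      moreover have "R (xs!(c+d)) (xs!(c+d+1))" using R c h by simp
      moreover have "a \<le> c+d" "c+d \<le> b" "a \<le> c + Suc d" using c h by arith+
      ultimately show "xs!(c + Suc d) \<in> C" using cl[rule_format, of "c+d" "c + Suc d"] h by simp
    qed
  qed
  have down: "d \<le> c - a \<longrightarrow> xs!(c-d) \<in> C" for d
  proof (induction d)
    case 0 then show ?case using c by simp
  next
    case (Suc d)
    show ?case
    proof
      assume h: "Suc d \<le> c - a"
      then have "xs!(c-d) \<in> C" using Suc.IH by simp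
      moreover have "R (xs!(c-Suc d)) (xs!(c - Suc d + 1))" using R c h by simp
      moreover have "c - Suc d + 1 = c - d" using h by arith
      ultimately have "R (xs!(c-d)) (xs!(c - Suc d))" using sy by metis
      moreover have "a \<le> c-d" "c-d \<le> b" "a \<le> c - Suc d" "c - Suc d \<le> b" using c h by arith+
      ultimately show "xs!(c - Suc d) \<in> C" using cl[rule_format, of "c-d" "c - Suc d"] \<open>xs!(c-d) \<in> C\<close> by blast
    qed
  qed
  show ?thesis
  proof (intro allI impI)
    fix i assume i: "a \<le> i" "i \<le> b"
    show "xs!i \<in> C"
    proof (cases "c \<le> i")
      case True
      then show ?thesis using up[of "i - c"] i by simp
    next
      case False
      then show ?thesis using down[of "c - i"] i by simp
    qed
  qed
qed

lemma cycle_walk: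
  assumes d: "distinct xs" and n2: "length xs \<ge> 2"
    and ad: "\<forall>i<length xs. R (xs!i) (xs!((i+1) mod length xs))"
    and sy: "\<And>x y. R x y \<Longrightarrow> R y x"
    and cl: "\<forall>x\<in>set xs. \<forall>y\<in>set xs. x \<in> C \<longrightarrow> R x y \<longrightarrow> y \<in> C \<or> y = v"
    and p: "p < length xs" "xs!p = v"
    and q: "q < length xs" "q \<noteq> p" "xs!q \<in> C"
  shows "\<forall>j<length xs. j \<noteq> p \<longrightarrow> xs!j \<in> C"
proof -
  define n where "n = length xs"
  have nv: "xs!j \<noteq> v" if "j < n" "j \<noteq> p" for j
    using d p that nth_eq_iff_index_eq unfolding n_def by metis
  have adn: "R (xs!i) (xs!(i+1))" if "i+1 < n" for i
    using ad[rule_format, of i] that unfolding n_def by simp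
  have wrap: "R (xs!(n-1)) (xs!0)"
  proof -
    have "n - 1 < n" "n - 1 + 1 = n" using n2 unfolding n_def by simp_all
    then have "n - 1 < n" "(n - 1 + 1) mod n = 0" by simp_all
    then show ?thesis using ad[rule_format, of "n-1"] unfolding n_def by simp
  qed
  have clj: "xs!j \<in> C" if "i < n" "j < n" "j \<noteq> p" "xs!i \<in> C" "R (xs!i) (xs!j)" for i j
    using cl that nv[OF that(2,3)] nth_mem unfolding n_def by blast
  have IW: "\<forall>i. a \<le> i \<longrightarrow> i \<le> b \<longrightarrow> xs!i \<in> C"
    if "b < n" "p < a \<or> b < p" "a \<le> c" "c \<le> b" "xs!c \<in> C" for a b c
  proof (rule interval_walk[where R=R])
    show "\<forall>i. a \<le> i \<longrightarrow> i < b \<longrightarrow> R (xs!i) (xs!(i+1))" using adn that(1) by simp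
    show "\<And>x y. R x y \<Longrightarrow> R y x" by (rule sy)
    show "\<forall>i j. a \<le> i \<longrightarrow> i \<le> b \<longrightarrow> a \<le> j \<longrightarrow> j \<le> b \<longrightarrow> xs!i \<in> C \<longrightarrow> R (xs!i) (xs!j) \<longrightarrow> xs!j \<in> C"
    proof (intro allI impI)
      fix i j assume h: "a \<le> i" "i \<le> b" "a \<le> j" "j \<le> b" "xs!i \<in> C" "R (xs!i) (xs!j)"
      have "i < n" "j < n" "j \<noteq> p" using h that(1,2) by arith+
      then show "xs!j \<in> C" using clj h(5,6) by blast
    qed
  qed (use that in auto)
  have I1: "\<forall>i. 0 \<le> i \<longrightarrow> i \<le> p - 1 \<longrightarrow> xs!i \<in> C" if "xs!c \<in> C" "c < p" for c
    using IW[of "p-1" 0 c] that p unfolding n_def by simp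
  have I2: "\<forall>i. p + 1 \<le> i \<longrightarrow> i \<le> n - 1 \<longrightarrow> xs!i \<in> C" if "xs!c \<in> C" "p < c" "c < n" for c
    using IW[of "n-1" "p+1" c] that p unfolding n_def by simp
  have all1: "\<forall>i<p. xs!i \<in> C" and all2: "\<forall>i. p < i \<longrightarrow> i < n \<longrightarrow> xs!i \<in> C"
  proof -
    have "(\<forall>i<p. xs!i \<in> C) \<and> (\<forall>i. p < i \<longrightarrow> i < n \<longrightarrow> xs!i \<in> C)"
    proof (cases "q < p")
      case True
      have a1: "\<forall>i<p. xs!i \<in> C" using I1[OF q(3) True] True by auto
      have "\<forall>i. p < i \<longrightarrow> i < n \<longrightarrow> xs!i \<in> C"
      proof (cases "p < n - 1")
        case True
        have "xs!0 \<in> C" using a1 \<open>q < p\<close> by simp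
        moreover have "R (xs!0) (xs!(n-1))" using wrap sy by blast
        moreover have "0 < n" "n - 1 < n" "n - 1 \<noteq> p" using True n2 unfolding n_def by arith+
        ultimately have "xs!(n-1) \<in> C" using clj[of 0 "n-1"] by blast
        then show ?thesis using I2[of "n-1"] True by auto
      next
        case False then show ?thesis by auto
      qed
      then show ?thesis using a1 by blast
    next
      case False
      then have qp: "p < q" using q(2) by simp
      have a2: "\<forall>i. p < i \<longrightarrow> i < n \<longrightarrow> xs!i \<in> C" using I2[OF q(3) qp] q(1) unfolding n_def by auto
      have "\<forall>i<p. xs!i \<in> C"
      proof (cases "0 < p")
        case True
        have "xs!(n-1) \<in> C" using a2 qp q(1) unfolding n_def by simp
        moreover have "0 < n" "n - 1 < n" "0 \<noteq> p" using True n2 unfolding n_def by arith+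
        ultimately have "xs!0 \<in> C" using clj[of "n-1" 0] wrap by blast
        then show ?thesis using I1[of 0] True by auto
      next
        case False then show ?thesis by auto
      qed
      then show ?thesis using a2 by blast
    qed
    then show "\<forall>i<p. xs!i \<in> C" "\<forall>i. p < i \<longrightarrow> i < n \<longrightarrow> xs!i \<in> C" by blast+
  qed
  show ?thesis
  proof (intro allI impI)
    fix j assume "j < length xs" "j \<noteq> p"
    then show "xs!j \<in> C" using all1 all2 unfolding n_def by (cases "j < p") auto
  qed
qed



locale S9 =
  fixes V :: "'a set" and m :: "'a \<Rightarrow> 'a \<Rightarrow> nat" and k :: nat and v :: 'a
    and B B' :: "'a set" and Cs :: "'a set set" and f :: "'a set \<Rightarrow> 'a"
  assumes graph: "mgraph V m"
    and vV: "v \<in> V"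
    and B_sub: "B \<subseteq> V - {v}"
    and no_cycle: "\<not> cycle_through V m B v"
    and many_trees: "card (C_tree V m B v) \<ge> 4 * k"
    and B'_sub: "B' \<subseteq> B" and B'_ne: "B' \<noteq> {}" and B'_card: "card B' \<le> k"
    and Cs_sub: "Cs \<subseteq> C_tree V m B v"
    and cond_a: "\<forall>C \<in> Cs. \<forall>b \<in> B. (\<exists>x \<in> C. adj m b x) \<longrightarrow> b \<in> B'"
    and fB: "\<forall>C \<in> Cs. f C \<in> B' \<and> (\<exists>x \<in> C. adj m (f C) x)"
    and fcard: "\<forall>b \<in> B'. card {C \<in> Cs. f C = b} = 2"
begin

abbreviation "m' \<equiv> reduced m v B' Cs"
abbreviation "T0 \<equiv> V - {v} - B"
abbreviation "Z \<equiv> \<Union>Cs"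
abbreviation "CT \<equiv> C_tree V m B v"

lemma symm_m: "symm m" using graph unfolding mgraph_def symm_def by blast
lemma finV: "finite V" using graph unfolding mgraph_def by blast
lemma adjV: "adj m x y \<Longrightarrow> x \<in> V \<and> y \<in> V" using graph unfolding mgraph_def adj_def by blast

lemma symm_m': "symm m'"
  using symm_m unfolding symm_def reduced_def by auto

lemma finB': "finite B'"
proof -
  have "B' \<subseteq> V" using B'_sub B_sub by blast
  then show ?thesis using finV by (rule finite_subset)
qed
lemma k1: "k \<ge> 1"
proof -
  have "card B' > 0" using finB' B'_ne by (simp add: card_gt_0_iff)
  then show ?thesis using B'_card by linarith
qed

lemma CT_D:
  assumes "C \<in> CT"
  shows "C \<in> components m T0" "C \<subseteq> T0" "is_tree m C" "\<exists>u\<in>C. adj m v u"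
  using assms comp_sub unfolding C_tree_def nbhd_def by auto

lemma finCT: "finite CT"
proof -
  have "CT \<subseteq> components m T0" unfolding C_tree_def by blast
  moreover have "finite (components m T0)" using finV by (intro comp_finite) simp
  ultimately show ?thesis by (rule finite_subset)
qed

lemma finCs: "finite Cs" using Cs_sub finCT by (rule finite_subset)

lemma Z_T0: "Z \<subseteq> T0" using Cs_sub CT_D(2) by blast

lemma CT_disj: "C1 \<in> CT \<Longrightarrow> C2 \<in> CT \<Longrightarrow> x \<in> C1 \<Longrightarrow> x \<in> C2 \<Longrightarrow> C1 = C2"
  using comp_disj[OF symm_m] CT_D(1) by blast

lemma card_Cs: "card Cs = 2 * card B'"
proof -
  have "Cs = (\<Union>b\<in>B'. {C \<in> Cs. f C = b})" using fB by auto
  then have "card Cs = (\<Sum>b\<in>B'. card {C \<in> Cs. f C = b})"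
    using card_UN_disjoint[OF finB', of "\<lambda>b. {C \<in> Cs. f C = b}"] finCs by auto
  also have "\<dots> = (\<Sum>b\<in>B'. 2)" using fcard by simp
  finally show ?thesis by simp
qed

lemma F3: "x \<noteq> v \<Longrightarrow> y \<noteq> v \<Longrightarrow> m' x y = m x y"
  unfolding reduced_def by simp

lemma B'_Z: "B' \<inter> Z = {}" using B'_sub Z_T0 by blast

lemma F4: "z \<in> Z \<Longrightarrow> m' v z = 0 \<and> m' z v = 0"
  using B'_Z unfolding reduced_def by auto

lemma F5: "y \<notin> Z \<Longrightarrow> y \<notin> B' \<Longrightarrow> m' v y = m v y \<and> m' y v = m y v"
  unfolding reduced_def by auto

lemma F6: "b \<in> B' \<Longrightarrow> m' v b \<ge> 2"
  using B'_Z unfolding reduced_def by auto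

lemma F8:
  assumes "C \<in> Cs" "x \<in> C" "adj m x y"
  shows "y \<in> C \<or> y = v \<or> y \<in> B'"
proof -
  have yV: "y \<in> V" using adjV assms(3) by blast
  consider "y = v" | "y \<in> B" | "y \<in> T0" using yV by blast
  then show ?thesis
  proof cases
    case 2
    have "adj m y x" using adj_sym[OF symm_m assms(3)] .
    then show ?thesis using cond_a assms(1,2) 2 by blast
  next
    case 3
    have "C \<in> components m T0" using CT_D(1) Cs_sub assms(1) by blast
    then show ?thesis using comp_adj[OF symm_m _ assms(2) 3 assms(3)] by blast
  qed simp
qed

lemma clique_count:
  assumes F: "F \<subseteq> components m T0" "finite F"
    and Fu: "\<forall>C\<in>F. \<exists>u\<in>C. adj m'' v u"
    and sy: "symm m''" and ag: "\<forall>x y. x \<noteq> v \<longrightarrow> y \<noteq> v \<longrightarrow> m'' x y = m x y"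
    and S: "S \<subseteq> V" "v \<in> S" and K: "K \<in> components m'' S" "v \<in> K" "is_clique m'' K"
  shows "card F \<le> card ((V - S) \<inter> \<Union>F) + 1"
proof -
  have "\<forall>C\<in>F. \<exists>x. x \<in> C \<and> adj m'' v x" using Fu by blast
  from bchoice[OF this] obtain u where u: "\<forall>C\<in>F. u C \<in> C \<and> adj m'' v (u C)" by blast
  have FT: "C \<subseteq> T0" if "C \<in> F" for C using F(1) comp_sub that by blast
  have inj: "inj_on u F"
  proof (rule inj_onI)
    fix C1 C2 assume h: "C1 \<in> F" "C2 \<in> F" "u C1 = u C2"
    have "u C1 \<in> C1" "u C1 \<in> C2" using u h by auto
    then show "C1 = C2" using comp_disj[OF symm_m, of C1 T0 C2 "u C1"] F(1) h(1,2) by blast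
  qed
  define F1 where "F1 = {C\<in>F. u C \<in> S}"
  have F1eq: "C1 = C2" if "C1 \<in> F1" "C2 \<in> F1" for C1 C2
  proof (rule ccontr)
    assume ne: "C1 \<noteq> C2"
    have c1: "C1 \<in> F" "u C1 \<in> S" "C2 \<in> F" "u C2 \<in> S" using that unfolding F1_def by auto
    have "u C1 \<in> K" using comp_adj[OF sy K(1) K(2) c1(2)] u c1(1) by blast
    moreover have "u C2 \<in> K" using comp_adj[OF sy K(1) K(2) c1(4)] u c1(3) by blast
    moreover have "u C1 \<noteq> u C2" using inj ne c1 inj_on_eq_iff by metis
    ultimately have "m'' (u C1) (u C2) = 1" using K(3) unfolding is_clique_def by blast
    moreover have "u C1 \<in> T0" "u C2 \<in> T0" using FT u c1 by blast+
    ultimately have "adj m (u C1) (u C2)" using ag unfolding adj_def by auto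
    then have "u C2 \<in> C1" using comp_adj[OF symm_m _ _ \<open>u C2 \<in> T0\<close>] F(1) c1(1) u by blast
    then show False using ne comp_disj[OF symm_m, of C1 T0 C2 "u C2"] F(1) c1 u by blast
  qed
  have cF1: "card F1 \<le> 1"
    using card_le_Suc0_iff_eq[of F1] F(2) F1eq unfolding F1_def by auto
  have "u ` (F - F1) \<subseteq> (V - S) \<inter> \<Union>F" using u FT unfolding F1_def by blast
  moreover have "finite ((V - S) \<inter> \<Union>F)" using finV by blast
  moreover have "inj_on u (F - F1)" using inj inj_on_subset by blast
  ultimately have c2: "card (F - F1) \<le> card ((V - S) \<inter> \<Union>F)" using card_inj_on_le by blast
  have F1F: "F1 \<subseteq> F" unfolding F1_def by blast
  then have fF1: "finite F1" using F(2) finite_subset by blast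
  have "card (F - F1) = card F - card F1" by (rule card_Diff_subset[OF fF1 F1F])
  moreover have "card F1 \<le> card F" by (rule card_mono[OF F(2) F1F])
  ultimately have "card F = card F1 + card (F - F1)" by arith
  then show ?thesis using cF1 c2 by simp
qed

end


lemma comps_cong:
  assumes "\<forall>x\<in>S. \<forall>y\<in>S. m x y = m' x y"
  shows "components m S = components m' S"
  unfolding components_def reach_cong[OF assms] ..

lemma feasible_cong:
  assumes "feasible V m k X" "\<forall>x\<in>V - X. \<forall>y\<in>V - X. m x y = m' x y"
  shows "feasible V m' k X"
proof -
  have "is_clique m' C \<or> is_tree m' C" if "C \<in> components m' (V - X)" for C
  proof -
    have C: "C \<in> components m (V - X)" using that comps_cong[OF assms(2)] by simp
    then have "C \<subseteq> V - X" by (rule comp_sub)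
    then have ag: "\<forall>x\<in>C. \<forall>y\<in>C. m x y = m' x y" using assms(2) by blast
    have "is_clique m C \<or> is_tree m C" using assms(1) C unfolding feasible_def by blast
    then show ?thesis using tree_cong[OF ag] by blast
  qed
  then show ?thesis using assms(1) unfolding feasible_def by blast
qed

context S9 begin

lemma hit:
  assumes feas: "feasible V m k X" and vX: "v \<notin> X" and b: "b \<in> B'"
  shows "b \<in> X \<or> (\<exists>C\<in>Cs. f C = b \<and> X \<inter> C \<noteq> {})"
proof (rule ccontr)
  assume "\<not> ?thesis"
  then have bX: "b \<notin> X" and hX: "\<forall>C\<in>Cs. f C = b \<longrightarrow> X \<inter> C = {}" by auto
  have "card {C \<in> Cs. f C = b} = 2" using fcard b by blast
  then obtain C1 C2 where c12: "{C \<in> Cs. f C = b} = {C1, C2}" "C1 \<noteq> C2" by (auto simp: card_2_iff)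
  have C1: "C1 \<in> Cs" "f C1 = b" and C2: "C2 \<in> Cs" "f C2 = b" using c12(1) by blast+
  have C1CT: "C1 \<in> CT" and C2CT: "C2 \<in> CT" using C1 C2 Cs_sub by blast+
  have X1: "X \<inter> C1 = {}" and X2: "X \<inter> C2 = {}" using hX C1 C2 by blast+
  define S where "S = V - X"
  have XV: "X \<subseteq> V" "card X \<le> k" using feas unfolding feasible_def by blast+
  have bV: "b \<in> V" using b B'_sub B_sub by blast
  have bv: "b \<noteq> v" using b B'_sub B_sub by blast
  have vS: "v \<in> S" and bS: "b \<in> S" using vV vX bX bV unfolding S_def by blast+
  define K where "K = {w. reach m S v w}"
  have K: "K \<in> components m S" unfolding K_def using vS by (rule comp_I)
  have vK: "v \<in> K" unfolding K_def by (simp add: reach_refl)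
  have "is_clique m K \<or> is_tree m K" using feas K unfolding feasible_def S_def by blast
  then show False
  proof
    assume cl: "is_clique m K"
    have "card CT \<le> card ((V - S) \<inter> \<Union>CT) + 1"
    proof (rule clique_count[OF _ finCT _ symm_m _ _ vS K vK cl])
      show "CT \<subseteq> components m T0" using CT_D(1) by blast
      show "\<forall>C\<in>CT. \<exists>u\<in>C. adj m v u" using CT_D(4) by blast
      show "\<forall>x y. x \<noteq> v \<longrightarrow> y \<noteq> v \<longrightarrow> m x y = m x y" by simp
      show "S \<subseteq> V" unfolding S_def by blast
    qed
    moreover have "card ((V - S) \<inter> \<Union>CT) \<le> card X"
    proof (rule card_mono)
      show "finite X" using XV(1) finV finite_subset by blast
      show "(V - S) \<inter> \<Union>CT \<subseteq> X" unfolding S_def by blast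
    qed
    ultimately show False using XV(2) many_trees k1 by linarith
  next
    assume tr: "is_tree m K"
    have C1S: "C1 \<subseteq> S" and C2S: "C2 \<subseteq> S" using CT_D(2)[OF C1CT] CT_D(2)[OF C2CT] X1 X2 unfolding S_def by blast+
    obtain x1 where x1: "x1 \<in> C1" "adj m v x1" using CT_D(4)[OF C1CT] by blast
    obtain y1 where y1: "y1 \<in> C1" "adj m b y1" using fB C1 by blast
    obtain x2 where x2: "x2 \<in> C2" "adj m v x2" using CT_D(4)[OF C2CT] by blast
    obtain y2 where y2: "y2 \<in> C2" "adj m b y2" using fB C2 by blast
    have con1: "connected_in m C1" by (rule comp_connected[OF symm_m CT_D(1)[OF C1CT]])
    have con2: "connected_in m C2" by (rule comp_connected[OF symm_m CT_D(1)[OF C2CT]])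
    have r1: "reach m C1 x1 y1" using con1 x1 y1 unfolding connected_in_def by blast
    have r2: "reach m C2 y2 x2" using con2 x2 y2 unfolding connected_in_def by blast
    obtain p1 where p1: "p1 \<noteq> []" "hd p1 = x1" "last p1 = y1" "set p1 \<subseteq> C1" "distinct p1" "successively (adj m) p1"
      using path_exists[OF r1 x1(1)] by blast
    obtain p2 where p2: "p2 \<noteq> []" "hd p2 = y2" "last p2 = x2" "set p2 \<subseteq> C2" "distinct p2" "successively (adj m) p2"
      using path_exists[OF r2 y2(1)] by blast
    define xs where "xs = [v] @ p1 @ [b] @ p2"
    have disj12: "C1 \<inter> C2 = {}" using CT_disj[OF C1CT C2CT] c12(2) by blast
    have vC: "v \<notin> C1" "v \<notin> C2" "b \<notin> C1" "b \<notin> C2" using CT_D(2)[OF C1CT] CT_D(2)[OF C2CT] b B'_sub by blast+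
    have dist: "distinct xs" unfolding xs_def using p1 p2 disj12 vC bv by auto
    have len: "length xs \<ge> 3" unfolding xs_def using p1(1) p2(1) by (cases p1; cases p2) auto
    have "adj m y1 b" using adj_sym[OF symm_m y1(2)] .
    have sb: "successively (adj m) (b # p2)" using p2 y2(2) by (simp add: successively_Cons)
    have sp: "successively (adj m) (p1 @ b # p2)" using sb p1 \<open>adj m y1 b\<close>
      by (simp add: successively_append_iff)
    have "hd (p1 @ b # p2) = x1" using p1 by simp
    then have "successively (adj m) (v # p1 @ b # p2)" using sp x1(2) by (simp add: successively_Cons)
    then have succ: "successively (adj m) xs" unfolding xs_def by simp
    have lh: "adj m (last xs) (hd xs)" unfolding xs_def using p2 adj_sym[OF symm_m x2(2)] by simp
    have x1S: "x1 \<in> S" "x2 \<in> S" "y1 \<in> S" "y2 \<in> S" using C1S C2S x1 x2 y1 y2 by blast+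
    have rx1: "reach m S v x1" by (rule reach_step[OF reach_refl vS x1S(1) x1(2)])
    have C1K: "C1 \<subseteq> K"
    proof
      fix w assume "w \<in> C1"
      then have "reach m C1 x1 w" using con1 x1 unfolding connected_in_def by blast
      then have "reach m S x1 w" by (rule reach_mono[OF C1S])
      then show "w \<in> K" unfolding K_def using reach_trans[OF rx1] by blast
    qed
    have "reach m S v y1" using C1K y1(1) unfolding K_def by blast
    then have rb: "reach m S v b" by (rule reach_step[OF _ x1S(3) bS \<open>adj m y1 b\<close>])
    have ry2: "reach m S v y2" by (rule reach_step[OF rb bS x1S(4) y2(2)])
    have C2K: "C2 \<subseteq> K"
    proof
      fix w assume "w \<in> C2"
      then have "reach m C2 y2 w" using con2 y2 unfolding connected_in_def by blast
      then have "reach m S y2 w" by (rule reach_mono[OF C2S])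
      then show "w \<in> K" unfolding K_def using reach_trans[OF ry2] by blast
    qed
    have bK: "b \<in> K" using rb unfolding K_def by blast
    have "set xs \<subseteq> K" unfolding xs_def using p1(4) p2(4) C1K C2K vK bK by auto
    then have "is_cycle m K xs" by (rule cycle_of_path[OF dist len succ lh])
    then show False using tr unfolding is_tree_def acyclic_in_def by blast
  qed
qed

end


context S9 begin

lemma fwd:
  assumes feas: "feasible V m k X"
  shows "yes_instance V m' k"
proof (cases "v \<in> X")
  case True
  have "\<forall>x\<in>V - X. \<forall>y\<in>V - X. m x y = m' x y"
  proof (intro ballI)
    fix x y assume "x \<in> V - X" "y \<in> V - X"
    then have "x \<noteq> v" "y \<noteq> v" using True by blast+
    then show "m x y = m' x y" using F3 by simp
  qed
  then show ?thesis using feasible_cong[OF feas] unfolding yes_instance_def by blast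
next
  case False
  have XV: "X \<subseteq> V" "card X \<le> k" using feas unfolding feasible_def by blast+
  have finX: "finite X" using XV(1) finV finite_subset by blast
  define W where "W = B' \<union> Z"
  define X' where "X' = (X - W) \<union> B'"
  have B'V: "B' \<subseteq> V" using B'_sub B_sub by blast
  define g where "g b = (if b \<in> X then b else (SOME x. x \<in> X \<and> (\<exists>C\<in>Cs. f C = b \<and> x \<in> C)))" for b
  have g: "g b \<in> X \<and> (b \<in> X \<and> g b = b \<or> b \<notin> X \<and> (\<exists>C\<in>Cs. f C = b \<and> g b \<in> C))" if "b \<in> B'" for b
  proof (cases "b \<in> X")
    case True then show ?thesis unfolding g_def by simp
  next
    case False
    then have "\<exists>x. x \<in> X \<and> (\<exists>C\<in>Cs. f C = b \<and> x \<in> C)" using hit[OF feas \<open>v \<notin> X\<close> that] by blast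
    then have "(SOME x. x \<in> X \<and> (\<exists>C\<in>Cs. f C = b \<and> x \<in> C)) \<in> X \<and> (\<exists>C\<in>Cs. f C = b \<and> (SOME x. x \<in> X \<and> (\<exists>C\<in>Cs. f C = b \<and> x \<in> C)) \<in> C)"
      by (rule someI_ex)
    then show ?thesis using False unfolding g_def by simp
  qed
  have inj: "inj_on g B'"
  proof (rule inj_onI)
    fix b1 b2 assume h: "b1 \<in> B'" "b2 \<in> B'" "g b1 = g b2"
    note g1 = g[OF h(1)] and g2 = g[OF h(2)]
    have ZB: "x \<in> Z \<Longrightarrow> x \<notin> B'" for x using B'_Z by blast
    show "b1 = b2"
    proof (cases "b1 \<in> X")
      case True
      show ?thesis
      proof (cases "b2 \<in> X")
        case True then show ?thesis using g1 g2 h \<open>b1 \<in> X\<close> by simp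
      next
        case False
        then obtain C where "C \<in> Cs" "g b2 \<in> C" using g2 by blast
        then have "g b2 \<in> Z" by blast
        moreover have "g b2 = b1" using h(3) g1 True by simp
        ultimately show ?thesis using ZB h(1) by blast
      qed
    next
      case False
      then obtain C1 where C1: "C1 \<in> Cs" "f C1 = b1" "g b1 \<in> C1" using g1 by blast
      show ?thesis
      proof (cases "b2 \<in> X")
        case True
        have "g b1 \<in> Z" using C1 by blast
        moreover have "g b1 = b2" using h(3) g2 True by simp
        ultimately show ?thesis using ZB h(2) by blast
      next
        case False
        then obtain C2 where C2: "C2 \<in> Cs" "f C2 = b2" "g b2 \<in> C2" using g2 by blast
        have "C1 = C2" using CT_disj[of C1 C2 "g b1"] C1 C2 h(3) Cs_sub by auto
        then show ?thesis using C1 C2 by simp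
      qed
    qed
  qed
  have "g ` B' \<subseteq> X \<inter> W"
  proof
    fix x assume "x \<in> g ` B'"
    then obtain b where b: "b \<in> B'" "x = g b" by blast
    have "g b \<in> X \<and> (b \<in> X \<and> g b = b \<or> b \<notin> X \<and> (\<exists>C\<in>Cs. f C = b \<and> g b \<in> C))" by (rule g[OF b(1)])
    then have "g b \<in> X \<inter> W" using b(1) unfolding W_def by auto
    then show "x \<in> X \<inter> W" using b(2) by simp
  qed
  then have cB': "card B' \<le> card (X \<inter> W)" using card_inj_on_le[OF inj] finX by blast
  have "card X' \<le> card (X - W) + card B'" unfolding X'_def by (rule card_Un_le)
  moreover have "card X = card (X - W) + card (X \<inter> W)"
  proof -
    have "X = (X - W) \<union> (X \<inter> W)" by blast
    moreover have "card ((X - W) \<union> (X \<inter> W)) = card (X - W) + card (X \<inter> W)"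
      by (rule card_Un_disjoint) (use finX in auto)
    ultimately show ?thesis by simp
  qed
  ultimately have cX': "card X' \<le> k" using cB' XV(2) by linarith
  have X'V: "X' \<subseteq> V" unfolding X'_def using XV(1) B'V by blast
  define S' where "S' = V - X'"
  have B'X': "B' \<subseteq> X'" unfolding X'_def by blast
  have good: "is_clique m' D \<or> is_tree m' D" if D: "D \<in> components m' S'" for D
  proof -
    obtain u where u: "u \<in> S'" "u \<in> D" "D = {w. reach m' S' u w}" using comp_mem[OF D] by blast
    show ?thesis
    proof (cases "u \<in> Z")
      case True
      then obtain C where C: "C \<in> Cs" "u \<in> C" by blast
      have CCT: "C \<in> CT" using C Cs_sub by blast
      have CT0: "C \<subseteq> T0" using CT_D(2)[OF CCT] .
      have CS: "C \<subseteq> S'" using CT0 C(1) B'_Z unfolding S'_def X'_def W_def by blast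
      have vC: "v \<notin> C" using CT0 by blast
      have cl: "\<forall>x\<in>C. \<forall>y\<in>S'. adj m' x y \<longrightarrow> y \<in> C"
      proof (intro ballI impI)
        fix x y assume h: "x \<in> C" "y \<in> S'" "adj m' x y"
        have "y \<noteq> v"
        proof
          assume "y = v"
          then have "m' x y = 0" using F4[of x] h(1) C(1) by auto
          then show False using h(3) unfolding adj_def by simp
        qed
        moreover have "x \<noteq> v" using h(1) vC by blast
        ultimately have "adj m x y" using h(3) F3 unfolding adj_def by simp
        then have "y \<in> C \<or> y = v \<or> y \<in> B'" using F8[OF C(1) h(1)] by blast
        then show "y \<in> C" using \<open>y \<noteq> v\<close> h(2) B'X' unfolding S'_def by blast
      qed
      have agC: "\<forall>x\<in>C. \<forall>y\<in>C. m x y = m' x y" using vC F3 by metis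
      have "D = C"
      proof (rule set_eqI)
        fix w
        have "w \<in> D \<longleftrightarrow> reach m' C u w" using u(3) reach_closed[OF CS C(2) cl] by blast
        also have "\<dots> \<longleftrightarrow> reach m C u w" using reach_cong[OF agC] by simp
        also have "\<dots> \<longleftrightarrow> w \<in> C"
        proof
          assume "reach m C u w" then show "w \<in> C" using reach_in C(2) by metis
        next
          assume "w \<in> C"
          then show "reach m C u w" using comp_connected[OF symm_m CT_D(1)[OF CCT]] C(2)
            unfolding connected_in_def by blast
        qed
        finally show "w \<in> D \<longleftrightarrow> w \<in> C" .
      qed
      moreover have "is_tree m C" using CT_D(3)[OF CCT] .
      ultimately show ?thesis using tree_cong(1)[OF agC] by blast
    next
      case False
      define T where "T = S' - Z"
      have uT: "u \<in> T" using u(1) False unfolding T_def by blast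
      have TS: "T \<subseteq> S'" unfolding T_def by blast
      have cl: "\<forall>x\<in>T. \<forall>y\<in>S'. adj m' x y \<longrightarrow> y \<in> T"
      proof (intro ballI impI)
        fix x y assume h: "x \<in> T" "y \<in> S'" "adj m' x y"
        show "y \<in> T"
        proof (rule ccontr)
          assume "y \<notin> T"
          then have "y \<in> Z" using h(2) unfolding T_def by blast
          then obtain C where C: "C \<in> Cs" "y \<in> C" by blast
          have yv: "y \<noteq> v" using \<open>y \<in> Z\<close> Z_T0 by blast
          show False
          proof (cases "x = v")
            case True
            then show False using F4[OF \<open>y \<in> Z\<close>] h(3) unfolding adj_def by simp
          next
            case False
            then have "adj m x y" using h(3) F3[OF False yv] unfolding adj_def by simp
            then have "adj m y x" by (rule adj_sym[OF symm_m])
            then have "x \<in> C \<or> x = v \<or> x \<in> B'" using F8[OF C] by blast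
            then show False using False h(1) B'X' C(1) unfolding T_def S'_def by blast
          qed
        qed
      qed
      have agT: "\<forall>x\<in>T. \<forall>y\<in>T. m' x y = m x y"
      proof (intro ballI)
        fix x y assume h: "x \<in> T" "y \<in> T"
        have nZ: "x \<notin> Z" "y \<notin> Z" "x \<notin> B'" "y \<notin> B'" using h B'X' unfolding T_def S'_def by blast+
        show "m' x y = m x y"
        proof (cases "x = v")
          case True then show ?thesis using F5[OF nZ(2,4)] by simp
        next
          case False
          show ?thesis
          proof (cases "y = v")
            case True then show ?thesis using F5[OF nZ(1,3)] by simp
          next
            case False then show ?thesis using F3 \<open>x \<noteq> v\<close> by simp
          qed
        qed
      qed
      have DT: "D = {w. reach m T u w}"
        using u(3) reach_closed[OF TS uT cl] reach_cong[OF agT] by simp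
      then have DcT: "D \<in> components m T" using comp_I[OF uT] by simp
      have TX: "T \<subseteq> V - X" unfolding T_def S'_def X'_def W_def by blast
      obtain K where K: "K \<in> components m (V - X)" "D \<subseteq> K" using comp_sub_comp[OF symm_m TX DcT] by blast
      have DsT: "D \<subseteq> T" using comp_sub[OF DcT] .
      then have agD: "\<forall>x\<in>D. \<forall>y\<in>D. m x y = m' x y" using agT by (metis subsetD)
      have conD: "connected_in m D" by (rule comp_connected[OF symm_m DcT])
      have "is_clique m K \<or> is_tree m K" using feas K(1) unfolding feasible_def by blast
      then have "is_clique m D \<or> is_tree m D" using clique_sub[OF _ K(2)] tree_sub[OF _ K(2) conD] by blast
      then show ?thesis using tree_cong[OF agD] by blast
    qed
  qed
  have "feasible V m' k X'" unfolding feasible_def using X'V cX' good unfolding S'_def by blast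
  then show ?thesis unfolding yes_instance_def by blast
qed

end


context S9 begin

lemma bwd:
  assumes feas: "feasible V m' k X'"
  shows "yes_instance V m k"
proof (cases "v \<in> X'")
  case True
  have "\<forall>x\<in>V - X'. \<forall>y\<in>V - X'. m' x y = m x y"
  proof (intro ballI)
    fix x y assume "x \<in> V - X'" "y \<in> V - X'"
    then have "x \<noteq> v" "y \<noteq> v" using True by blast+
    then show "m' x y = m x y" using F3 by simp
  qed
  then show ?thesis using feasible_cong[OF feas] unfolding yes_instance_def by blast
next
  case False
  have XV: "X' \<subseteq> V" "card X' \<le> k" using feas unfolding feasible_def by blast+
  have finX: "finite X'" using XV(1) finV finite_subset by blast
  define S' where "S' = V - X'"
  have vS: "v \<in> S'" using vV False unfolding S'_def by blast
  define Kv where "Kv = {w. reach m' S' v w}"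
  have Kv: "Kv \<in> components m' S'" unfolding Kv_def using vS by (rule comp_I)
  have vK: "v \<in> Kv" unfolding Kv_def by (simp add: reach_refl)
  have Kgood: "is_clique m' Kv \<or> is_tree m' Kv" using feas Kv unfolding feasible_def S'_def by blast
  have B'X: "B' \<subseteq> X'"
  proof
    fix b assume b: "b \<in> B'"
    show "b \<in> X'"
    proof (rule ccontr)
      assume "b \<notin> X'"
      then have bS: "b \<in> S'" using b B'_sub B_sub unfolding S'_def by blast
      have bv: "b \<noteq> v" using b B'_sub B_sub by blast
      have m2: "m' v b \<ge> 2" using F6[OF b] .
      then have "adj m' v b" unfolding adj_def by simp
      then have bK: "b \<in> Kv" using comp_adj[OF symm_m' Kv vK bS] by blast
      show False using Kgood
      proof
        assume "is_clique m' Kv"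
        then have "m' v b = 1" using vK bK bv unfolding is_clique_def by auto
        then show False using m2 by simp
      next
        assume "is_tree m' Kv"
        moreover have "is_cycle m' Kv [v, b]" using vK bK bv m2 unfolding is_cycle_def by simp
        ultimately show False unfolding is_tree_def acyclic_in_def by blast
      qed
    qed
  qed
  have treeK: "is_tree m' Kv"
  proof (rule ccontr)
    assume "\<not> is_tree m' Kv"
    then have cl: "is_clique m' Kv" using Kgood by blast
    define F where "F = CT - Cs"
    have FCT: "F \<subseteq> CT" unfolding F_def by blast
    have finF: "finite F" using FCT finCT finite_subset by blast
    have "card F \<le> card ((V - S') \<inter> \<Union>F) + 1"
    proof (rule clique_count[OF _ finF _ symm_m' _ _ vS Kv vK cl])
      show "F \<subseteq> components m T0" using CT_D(1) FCT by blast
      show "\<forall>C\<in>F. \<exists>u\<in>C. adj m' v u"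
      proof
        fix C assume C: "C \<in> F"
        then have CCT: "C \<in> CT" "C \<notin> Cs" unfolding F_def by blast+
        obtain u where u: "u \<in> C" "adj m v u" using CT_D(4)[OF CCT(1)] by blast
        have uT: "u \<in> T0" using CT_D(2)[OF CCT(1)] u(1) by blast
        have "u \<notin> Z"
        proof
          assume "u \<in> Z"
          then obtain C' where "C' \<in> Cs" "u \<in> C'" by blast
          then have "C = C'" using CT_disj[OF CCT(1), of C' u] Cs_sub u(1) by blast
          then show False using CCT(2) \<open>C' \<in> Cs\<close> by simp
        qed
        moreover have "u \<notin> B'" using uT B'_sub by blast
        ultimately have "m' v u = m v u" using F5 by blast
        then have "adj m' v u" using u(2) unfolding adj_def by simp
        then show "\<exists>u\<in>C. adj m' v u" using u(1) by blast
      qed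
      show "\<forall>x y. x \<noteq> v \<longrightarrow> y \<noteq> v \<longrightarrow> m' x y = m x y" using F3 by blast
      show "S' \<subseteq> V" unfolding S'_def by blast
    qed
    moreover have "card B' + card ((V - S') \<inter> \<Union>F) \<le> card X'"
    proof -
      have "B' \<inter> ((V - S') \<inter> \<Union>F) = {}" using FCT CT_D(2) B'_sub by blast
      then have "card (B' \<union> ((V - S') \<inter> \<Union>F)) = card B' + card ((V - S') \<inter> \<Union>F)"
        using finB' finV by (intro card_Un_disjoint) auto
      moreover have "B' \<union> ((V - S') \<inter> \<Union>F) \<subseteq> X'" using B'X unfolding S'_def by blast
      ultimately show ?thesis using card_mono[OF finX] by metis
    qed
    moreover have "card F = card CT - card Cs" unfolding F_def by (rule card_Diff_subset[OF finCs Cs_sub])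
    moreover have "card Cs \<le> card CT" by (rule card_mono[OF finCT Cs_sub])
    ultimately show False using card_Cs many_trees XV(2) k1 B'_card by linarith
  qed
  have D_sub: "w \<in> Kv \<union> Z" if "reach m S' v w" for w
    using that unfolding reach_def
  proof (induction rule: rtranclp_induct)
    case base then show ?case using vK by blast
  next
    case (step y z)
    have yz: "y \<in> S'" "z \<in> S'" "adj m y z" using step.hyps(2) by simp_all
    show ?case
    proof (cases "y \<in> Kv")
      case True
      show ?thesis
      proof (cases "adj m' y z")
        case True
        then show ?thesis using comp_adj[OF symm_m' Kv \<open>y \<in> Kv\<close> yz(2)] by blast
      next
        case False
        show ?thesis
        proof (cases "z = v")
          case True then show ?thesis using vK by blast
        next
          case zv: False
          show ?thesis
          proof (cases "y = v")
            case True
            have "z \<notin> B'" using yz(2) B'X unfolding S'_def by blast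
            then show ?thesis using F5[of z] False yz(3) True unfolding adj_def by auto
          next
            case yv: False
            then show ?thesis using F3[OF yv zv] False yz(3) unfolding adj_def by simp
          qed
        qed
      qed
    next
      case False
      then have "y \<in> Z" using step.IH by blast
      then obtain C where C: "C \<in> Cs" "y \<in> C" by blast
      have "z \<in> C \<or> z = v \<or> z \<in> B'" using F8[OF C yz(3)] .
      then show ?thesis using vK C(1) yz(2) B'X unfolding S'_def by blast
    qed
  qed
  have good: "is_clique m D \<or> is_tree m D" if D: "D \<in> components m S'" for D
  proof (cases "v \<in> D")
    case False
    obtain u where u: "u \<in> S'" "u \<in> D" "D = {w. reach m S' u w}" using comp_mem[OF D] by blast
    have DS: "D \<subseteq> S'" using comp_sub[OF D] .
    have agD: "\<forall>x\<in>D. \<forall>y\<in>D. m x y = m' x y" using False F3 by metis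
    have clm: "\<forall>x\<in>D. \<forall>y\<in>S'. adj m x y \<longrightarrow> y \<in> D" using comp_adj[OF symm_m D] by blast
    have clm': "\<forall>x\<in>D. \<forall>y\<in>S'. adj m' x y \<longrightarrow> y \<in> D"
    proof (intro ballI impI)
      fix x y assume h: "x \<in> D" "y \<in> S'" "adj m' x y"
      have xv: "x \<noteq> v" using h(1) False by blast
      show "y \<in> D"
      proof (cases "y = v")
        case True
        have xB: "x \<notin> B'" using h(1) DS B'X unfolding S'_def by blast
        have xZ: "x \<notin> Z"
        proof
          assume "x \<in> Z"
          then have "m' x v = 0" using F4 by blast
          then show False using h(3) True unfolding adj_def by simp
        qed
        have "m' x v = m x v" using F5[OF xZ xB] by blast
        then have "adj m x v" using h(3) True unfolding adj_def by simp
        then have "v \<in> D" using clm h(1) vS by blast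
        then show ?thesis using False by blast
      next
        case yv: False
        then have "adj m x y" using h(3) F3[OF xv yv] unfolding adj_def by simp
        then show ?thesis using clm h by blast
      qed
    qed
    have "D = {w. reach m' S' u w}"
    proof (rule set_eqI)
      fix w
      have "w \<in> D \<longleftrightarrow> reach m D u w" using u(3) reach_closed[OF DS u(2) clm] by blast
      also have "\<dots> \<longleftrightarrow> reach m' D u w" using reach_cong[OF agD] by simp
      also have "\<dots> \<longleftrightarrow> reach m' S' u w" using reach_closed[OF DS u(2) clm'] by blast
      finally show "w \<in> D \<longleftrightarrow> w \<in> {w. reach m' S' u w}" by simp
    qed
    then have "D \<in> components m' S'" using comp_I[OF u(1)] by simp
    then have "is_clique m' D \<or> is_tree m' D" using feas unfolding feasible_def S'_def by blast
    then show ?thesis using tree_cong[OF agD] by blast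
  next
    case True
    have Deq: "D = {w. reach m S' v w}" by (rule comp_eq[OF symm_m D True])
    have DS: "D \<subseteq> S'" using comp_sub[OF D] .
    have "\<not> is_cycle m D xs" for xs
    proof
      assume cyc: "is_cycle m D xs"
      define n where "n = length xs"
      have n2: "n \<ge> 2" and ad: "\<forall>i<n. adj m (xs!i) (xs!((i+1) mod n))"
        using cyc_adj[OF cyc symm_m] unfolding n_def by blast+
      have dxs: "distinct xs" and sxs: "set xs \<subseteq> D" using cyc unfolding is_cycle_def by blast+
      show False
      proof (cases "\<exists>i<n. (xs!i = v \<and> xs!((i+1) mod n) \<in> Z) \<or> (xs!i \<in> Z \<and> xs!((i+1) mod n) = v)")
        case True
        then obtain p q where pq: "p < n" "q < n" "xs!p = v" "xs!q \<in> Z"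
          by (metis mod_less_divisor n2 less_le_trans zero_less_numeral)
        have qp: "q \<noteq> p" using pq Z_T0 by auto
        obtain C where C: "C \<in> Cs" "xs!q \<in> C" using pq(4) by blast
        have "\<forall>j<length xs. j \<noteq> p \<longrightarrow> xs!j \<in> C"
        proof (rule cycle_walk[where R="adj m", OF dxs])
          show "length xs \<ge> 2" using n2 unfolding n_def .
          show "\<forall>i<length xs. adj m (xs!i) (xs!((i+1) mod length xs))" using ad unfolding n_def .
          show "\<And>x y. adj m x y \<Longrightarrow> adj m y x" using adj_sym[OF symm_m] by blast
          show "\<forall>x\<in>set xs. \<forall>y\<in>set xs. x \<in> C \<longrightarrow> adj m x y \<longrightarrow> y \<in> C \<or> y = v"
          proof (intro ballI impI)
            fix x y assume h: "x \<in> set xs" "y \<in> set xs" "x \<in> C" "adj m x y"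
            have "y \<notin> B'" using h(2) sxs DS B'X unfolding S'_def by blast
            then show "y \<in> C \<or> y = v" using F8[OF C(1) h(3,4)] by blast
          qed
        qed (use pq qp C n_def in auto)
        then have "set xs \<subseteq> C \<union> {v}" using pq(1,3) unfolding n_def
          by (metis UnI1 UnI2 in_set_conv_nth singletonI subsetI)
        moreover have "C \<subseteq> T0" using CT_D(2) C(1) Cs_sub by blast
        ultimately have "set xs \<subseteq> V - B" using vV B_sub by blast
        then have "is_cycle m (V - B) xs" by (rule is_cycle_mono[OF cyc])
        moreover have "v \<in> set xs" using pq(1,3) unfolding n_def by (metis nth_mem)
        ultimately show False using no_cycle unfolding cycle_through_def by blast
      next
        case False
        have sS: "set xs \<subseteq> S'" using sxs DS by blast
        have cyc': "is_cycle m' S' xs"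
        proof (rule is_cycle_transfer[OF cyc sS])
          show "\<forall>i<length xs. m' (xs!i) (xs!((i+1) mod length xs)) = m (xs!i) (xs!((i+1) mod length xs))"
          proof (intro allI impI)
            fix i assume i: "i < length xs"
            define j where "j = (i+1) mod length xs"
            have "0 < length xs" using i by arith
            then have j: "j < length xs" unfolding j_def by (rule mod_less_divisor)
            have nB: "xs!i \<notin> B'" "xs!j \<notin> B'" using i j sS B'X nth_mem unfolding S'_def by blast+
            have nZ: "xs!i = v \<longrightarrow> xs!j \<notin> Z" "xs!j = v \<longrightarrow> xs!i \<notin> Z"
              using False i unfolding n_def j_def by blast+
            show "m' (xs!i) (xs!((i+1) mod length xs)) = m (xs!i) (xs!((i+1) mod length xs))"
              unfolding j_def[symmetric]
            proof (cases "xs!i = v")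
              case True then show "m' (xs!i) (xs!j) = m (xs!i) (xs!j)" using F5[of "xs!j"] nZ nB by auto
            next
              case iv: False
              show "m' (xs!i) (xs!j) = m (xs!i) (xs!j)"
              proof (cases "xs!j = v")
                case True then show ?thesis using F5[of "xs!i"] nZ nB by auto
              next
                case False then show ?thesis using F3[OF iv False] by simp
              qed
            qed
          qed
        qed
        have rr: "\<forall>j<n. reach m' S' (xs!0) (xs!j)" using cycle_reach[OF cyc' symm_m'] unfolding n_def .
        have n0: "0 < n" using n2 by simp
        show False
        proof (cases "xs!0 \<in> Kv")
          case True
          have "set xs \<subseteq> Kv"
          proof
            fix x assume "x \<in> set xs"
            then obtain j where "j < n" "x = xs!j" unfolding n_def by (metis in_set_conv_nth)
            then show "x \<in> Kv" using comp_reach[OF symm_m' Kv True] rr by blast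
          qed
          then have "is_cycle m' Kv xs" by (rule is_cycle_mono[OF cyc'])
          then show False using treeK unfolding is_tree_def acyclic_in_def by blast
        next
          case False
          have inZ: "xs!j \<in> Z" if "j < n" for j
          proof -
            have "xs!j \<notin> Kv"
            proof
              assume "xs!j \<in> Kv"
              moreover have "reach m' S' (xs!j) (xs!0)" using rr that reach_sym[OF symm_m'] by blast
              ultimately show False using comp_reach[OF symm_m' Kv] False by blast
            qed
            moreover have "xs!j \<in> D" using that sxs unfolding n_def by (metis nth_mem subsetD)
            ultimately show ?thesis using D_sub Deq by blast
          qed
          obtain C0 where C0: "C0 \<in> Cs" "xs!0 \<in> C0" using inZ[OF n0] by blast
          have C0c: "C0 \<in> components m T0" using CT_D(1) C0(1) Cs_sub by blast
          have inC: "j < n \<longrightarrow> xs!j \<in> C0" for j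
          proof (induction j)
            case 0 then show ?case using C0 by simp
          next
            case (Suc j)
            show ?case
            proof
              assume h: "Suc j < n"
              then have "xs!j \<in> C0" using Suc.IH by simp
              moreover have "adj m (xs!j) (xs!(Suc j))" using ad[rule_format, of j] h by simp
              moreover have "xs!(Suc j) \<in> T0" using inZ[OF h] Z_T0 by blast
              ultimately show "xs!(Suc j) \<in> C0" using comp_adj[OF symm_m C0c] by blast
            qed
          qed
          have "set xs \<subseteq> C0"
          proof
            fix x assume "x \<in> set xs"
            then obtain j where "j < n" "x = xs!j" unfolding n_def by (metis in_set_conv_nth)
            then show "x \<in> C0" using inC by blast
          qed
          then have "is_cycle m C0 xs" by (rule is_cycle_mono[OF cyc])
          moreover have "is_tree m C0" using CT_D(3) C0(1) Cs_sub by blast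
          ultimately show False unfolding is_tree_def acyclic_in_def by blast
        qed
      qed
    qed
    then have "acyclic_in m D" unfolding acyclic_in_def by blast
    moreover have "connected_in m D" by (rule comp_connected[OF symm_m D])
    ultimately show ?thesis unfolding is_tree_def by blast
  qed
  have "feasible V m k X'" unfolding feasible_def using XV good unfolding S'_def by blast
  then show ?thesis unfolding yes_instance_def by blast
qed

end
theorem mainTheorem9:
  fixes V :: "'a set" and m :: "'a \<Rightarrow> 'a \<Rightarrow> nat" and k :: nat and v :: 'a
    and B B' :: "'a set" and Cs :: "'a set set"
  assumes graph: "mgraph V m"
    and ls: "large_sparse V m k v"
    and B_sub: "B \<subseteq> V - {v}" and B_card: "card B \<le> 2 * k"
    and no_cycle: "\<not> cycle_through V m B v"
    and many_trees: "card (C_tree V m B v) \<ge> 4 * k"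
    and trees_touch_B: "\<forall>C \<in> C_tree V m B v. \<exists>x \<in> C. \<exists>b \<in> B. adj m x b"
    and B'_sub: "B' \<subseteq> B" and B'_ne: "B' \<noteq> {}" and B'_card: "card B' \<le> k"
    and Cs_sub: "Cs \<subseteq> C_tree V m B v" and Cs_ne: "Cs \<noteq> {}"
    and cond_a: "\<forall>C \<in> Cs. \<forall>b \<in> B. (\<exists>x \<in> C. adj m b x) \<longrightarrow> b \<in> B'"
    and cond_b: "\<exists>f. (\<forall>C \<in> Cs. f C \<in> B' \<and> (\<exists>x \<in> C. adj m (f C) x))
                    \<and> (\<forall>b \<in> B'. card {C \<in> Cs. f C = b} = 2)"
  shows "yes_instance V m k \<longleftrightarrow> yes_instance V (reduced m v B' Cs) k"
proof -
  obtain f where f: "\<forall>C \<in> Cs. f C \<in> B' \<and> (\<exists>x \<in> C. adj m (f C) x)"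
      "\<forall>b \<in> B'. card {C \<in> Cs. f C = b} = 2" using cond_b by blast
  have vV: "v \<in> V" using ls unfolding large_sparse_def by blast
  interpret S: S9 V m k v B B' Cs f
    using graph vV B_sub no_cycle many_trees B'_sub B'_ne B'_card Cs_sub cond_a f
    by (unfold_locales) auto
  show ?thesis
  proof
    assume "yes_instance V m k"
    then obtain X where "feasible V m k X" unfolding yes_instance_def by blast
    then show "yes_instance V (reduced m v B' Cs) k" by (rule S.fwd)
  next
    assume "yes_instance V (reduced m v B' Cs) k"
    then obtain X where "feasible V (reduced m v B' Cs) k X" unfolding yes_instance_def by blast
    then show "yes_instance V m k" by (rule S.bwd)
  qed
qed

end
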